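(* Let $N\ge2$, $\alpha,\beta>-1$, let $x_0<\dots<x_N$ be the JGL nodes with Lagrange basis $h_0,\dots,h_N$, and let $\mu\in(k-1,k)$ with $k\in\{1,2\}$. Suppose $\hat Q_j^\mu\in\mathcal P_N$, $1\le j\le N+1-k$, satisfy ${}^R\hat D_-^\mu\hat Q_j^\mu(x_i)=\delta_{ij}$ for $1\le i\le N+1-k$, together with $\hat Q_j^\mu(-1)=0$ if $k=1$ and $\hat Q_j^\mu(\pm1)=0$ if $k=2$. Let $\hat{\mathbf Q}^{(\mu)}_{lj}=\hat Q_j^\mu(x_l)$ and ${}^R\hat{\mathbf D}^{(\mu)}_{{\rm in},ij}=({}^R\hat D_-^\mu h_j)(x_i)$ for $1\le l,i,j\le N+1-k$. Then $$ \hat{\mathbf Q}^{(\mu)}\,{}^R\hat{\mathbf D}^{(\mu)}_{\rm in}={}^R\hat{\mathbf D}^{(\mu)}_{\rm in}\,\hat{\mathbf Q}^{(\mu)}=\mathbf I_{N+1-k}. $$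
   Context: For $\rho>0$, $(I_-^\rho u)(x)=\frac{1}{\Gamma(\rho)}\int_{-1}^x (x-y)^{\rho-1}u(y)\,dy$, $D^k=d^k/dx^k$; for $\mu\in(k-1,k)$ the Riemann–Liouville derivative is ${}^R D_-^\mu u=D^k(I_-^{k-\mu}u)$, and the modified Riemann–Liouville derivative is ${}^R\hat D_-^\mu u=(1+x)^\mu\,{}^R D_-^\mu u$ (for polynomial $u$ this is a polynomial, evaluated also at $x=-1$). The JGL nodes $x_0<\dots<x_N$ are the zeros of $(1-x^2)\frac{d}{dx}P_N^{(\alpha,\beta)}(x)$ (Jacobi polynomial, Szegő normalization), with $x_0=-1$, $x_N=1$; $h_j\in\mathcal P_N$ satisfies $h_j(x_i)=\delta_{ij}$. $\mathbf I_m$ is the $m\times m$ identity. *)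

theory Defs
  imports "HOL-Analysis.Analysis" "HOL-Computational_Algebra.Polynomial"
begin

text \<open>Jacobi polynomial in Szego normalization:
  P_N^(a,b)(x) = sum_{m=0}^N binom(N+a,N-m) binom(N+b,m) ((x-1)/2)^m ((x+1)/2)^(N-m).\<close>
definition jacobi_poly :: "real \<Rightarrow> real \<Rightarrow> nat \<Rightarrow> real poly" where
  "jacobi_poly a b N =
     (\<Sum>m\<le>N. smult (((real N + a) gchoose (N - m)) * ((real N + b) gchoose m))
                 ([:-1/2, 1/2:] ^ m * [:1/2, 1/2:] ^ (N - m)))"

text \<open>The JGL nodes are the zeros of (1 - x^2) times the derivative of P_N^(a,b).\<close>
definition JGL_poly :: "real \<Rightarrow> real \<Rightarrow> nat \<Rightarrow> real poly" where
  "JGL_poly a b N = [:1, 0, -1:] * pderiv (jacobi_poly a b N)"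

definition RL_integral :: "real \<Rightarrow> (real \<Rightarrow> real) \<Rightarrow> real \<Rightarrow> real" where
  "RL_integral \<rho> u x = (1 / Gamma \<rho>) * integral {-1..x} (\<lambda>y. (x - y) powr (\<rho> - 1) * u y)"

definition RL_deriv :: "real \<Rightarrow> (real \<Rightarrow> real) \<Rightarrow> real \<Rightarrow> real" where
  "RL_deriv \<mu> u x = (let k = nat \<lceil>\<mu>\<rceil> in (deriv ^^ k) (RL_integral (real k - \<mu>) u) x)"

definition mod_RL_deriv :: "real \<Rightarrow> (real \<Rightarrow> real) \<Rightarrow> real \<Rightarrow> real" where
  "mod_RL_deriv \<mu> u x = (1 + x) powr \<mu> * RL_deriv \<mu> u x"

end

theory Submission
  imports Defs "Jordan_Normal_Form.Determinant"
begin


definition Cc :: "real \<Rightarrow> nat \<Rightarrow> real" where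
  "Cc \<rho> n = integral {0..1} (\<lambda>t. (1-t) powr (\<rho>-1) * t ^ n)"

lemma beta_int01:
  assumes "\<rho> > 0"
  shows "((\<lambda>t. (1-t) powr (\<rho>-1) * t ^ n) has_integral Cc \<rho> n) {0..1}"
proof -
  have "(\<lambda>t. t powr (real n + 1 - 1) * (1 - t) powr (\<rho> - 1)) integrable_on {0..1}"
    using integrable_Beta'[of "real n + 1" \<rho>] assms by simp
  hence "(\<lambda>t. (1-t) powr (\<rho>-1) * t ^ n) integrable_on {0..1}"
  proof (rule integrable_spike_finite[of "{0}", rotated 2])
    show "finite {0::real}" by simp
    fix t :: real assume "t \<in> {0..1} - {0}"
    hence "t > 0" by auto
    thus "(1-t) powr (\<rho>-1) * t ^ n = t powr (real n + 1 - 1) * (1 - t) powr (\<rho> - 1)"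
      by (simp add: powr_realpow)
  qed
  thus ?thesis unfolding Cc_def by (rule integrable_integral)
qed

lemma beta_int:
  assumes "\<rho> > 0" "x > -1"
  shows "((\<lambda>y. (x-y) powr (\<rho>-1) * (1+y) ^ n) has_integral (Cc \<rho> n * (x+1) powr (real n + \<rho>))) {-1..x}"
proof -
  define m where "m = 1/(x+1)"
  have m: "m > 0" using assms by (simp add: m_def)
  have "((\<lambda>y. (\<lambda>t. (1-t) powr (\<rho>-1) * t ^ n) (m *\<^sub>R y + m)) has_integral (Cc \<rho> n /\<^sub>R m ^ DIM(real)))
           (cbox ((0 - m) /\<^sub>R m) ((1 - m) /\<^sub>R m))"
    using has_integral_affinity'[OF beta_int01[OF assms(1), of n, unfolded cbox_interval[symmetric]] m] .
  moreover have "cbox ((0 - m) /\<^sub>R m) ((1 - m) /\<^sub>R m) = {-1..x}"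
    using m assms by (simp add: m_def cbox_interval field_simps)
  ultimately have h: "((\<lambda>y. (1-(m*y+m)) powr (\<rho>-1) * (m*y+m) ^ n) has_integral (Cc \<rho> n * (x+1))) {-1..x}"
    using assms by (simp add: m_def mult.commute)
  define K where "K = (x+1) powr (\<rho>-1) * (x+1)^n"
  have h2: "((\<lambda>y. K * ((1-(m*y+m)) powr (\<rho>-1) * (m*y+m) ^ n)) has_integral (K * (Cc \<rho> n * (x+1)))) {-1..x}"
    by (rule has_integral_mult_right[OF h])
  have eqv: "K * (Cc \<rho> n * (x+1)) = Cc \<rho> n * (x+1) powr (real n + \<rho>)"
    using assms unfolding K_def
    by (simp add: powr_add powr_realpow[symmetric] powr_diff)
  have pt: "K * ((1-(m*y+m)) powr (\<rho>-1) * (m*y+m) ^ n) = (x-y) powr (\<rho>-1) * (1+y) ^ n"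
    if "y \<in> {-1..x}" for y
  proof -
    have x1: "x + 1 > 0" using assms by simp
    have e1: "1-(m*y+m) = (x-y)/(x+1)" using x1 by (simp add: m_def field_simps)
    have e2: "m*y+m = (1+y)/(x+1)" using x1 by (simp add: m_def field_simps)
    have e3: "((x-y)/(x+1)) powr (\<rho>-1) = (x-y) powr (\<rho>-1) / (x+1) powr (\<rho>-1)"
      using that x1 by (simp add: powr_divide)
    have n1: "(x+1) powr (\<rho>-1) \<noteq> 0" "(x+1)^n \<noteq> 0" using x1 by auto
    have "K * ((1-(m*y+m)) powr (\<rho>-1) * (m*y+m) ^ n) =
      ((x+1) powr (\<rho>-1) * ((x-y) powr (\<rho>-1) / (x+1) powr (\<rho>-1))) * ((x+1)^n * ((1+y)^n/(x+1)^n))"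
      unfolding e1 unfolding e2 e3 K_def power_divide by (simp only: mult_ac)
    also have "\<dots> = (x-y) powr (\<rho>-1) * (1+y) ^ n" using n1 by simp
    finally show ?thesis .
  qed
  show ?thesis
    using has_integral_spike_finite_eq[of "{}" "{-1..x}" "\<lambda>y. (x-y) powr (\<rho>-1) * (1+y) ^ n"
        "\<lambda>y. K * ((1-(m*y+m)) powr (\<rho>-1) * (m*y+m) ^ n)"] h2 pt eqv by simp
qed

lemma poly_shift_expand:
  fixes p :: "real poly"
  assumes "degree p \<le> N"
  shows "poly p y = (\<Sum>n\<le>N. coeff (pcompose p [:-1,1:]) n * (1+y) ^ n)"
proof -
  let ?q = "pcompose p [:-1,1:]"
  have "degree [:-1::real,1:] = 1" by simp
  hence dq: "degree ?q \<le> N" using assms by (simp add: degree_pcompose)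
  have "poly p y = poly ?q (1+y)" by (simp add: poly_pcompose)
  also have "\<dots> = (\<Sum>i\<le>degree ?q. coeff ?q i * (1+y) ^ i)" by (rule poly_altdef)
  also have "\<dots> = (\<Sum>n\<le>N. coeff ?q n * (1+y) ^ n)"
    by (rule sum.mono_neutral_left) (use dq in \<open>auto simp: coeff_eq_0\<close>)
  finally show ?thesis .
qed

lemma RL_int_poly:
  fixes p :: "real poly"
  assumes "\<rho> > 0" "x > -1" "degree p \<le> N"
  shows "RL_integral \<rho> (poly p) x =
    (\<Sum>n\<le>N. (coeff (pcompose p [:-1,1:]) n * Cc \<rho> n / Gamma \<rho>) * (x+1) powr (real n + \<rho>))"
proof -
  let ?q = "pcompose p [:-1,1:]"
  have "((\<lambda>y. \<Sum>n\<le>N. coeff ?q n * ((x-y) powr (\<rho>-1) * (1+y) ^ n)) has_integral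
      (\<Sum>n\<le>N. coeff ?q n * (Cc \<rho> n * (x+1) powr (real n + \<rho>)))) {-1..x}"
    by (intro has_integral_sum finite_atMost ballI has_integral_mult_right beta_int assms)
  moreover have "(\<lambda>y. \<Sum>n\<le>N. coeff ?q n * ((x-y) powr (\<rho>-1) * (1+y) ^ n)) =
      (\<lambda>y. (x - y) powr (\<rho> - 1) * poly p y)"
    by (rule ext) (simp add: poly_shift_expand[OF assms(3)] sum_distrib_left mult_ac)
  ultimately have "integral {-1..x} (\<lambda>y. (x - y) powr (\<rho> - 1) * poly p y) =
      (\<Sum>n\<le>N. coeff ?q n * (Cc \<rho> n * (x+1) powr (real n + \<rho>)))"
    by (simp add: integral_unique)
  thus ?thesis unfolding RL_integral_def by (simp add: sum_distrib_left sum_divide_distrib mult_ac)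
qed

lemma higher_deriv_powr_sum:
  assumes "finite S" "x > -1"
  shows "(deriv ^^ k) (\<lambda>z. \<Sum>n\<in>S. c n * (z+1) powr e n) x =
     (\<Sum>n\<in>S. c n * ((\<Prod>i<k. (e n - real i)) * (x+1) powr (e n - real k)))"
  using assms(2)
proof (induction k arbitrary: c e x)
  case 0
  then show ?case by simp
next
  case (Suc k)
  have d: "deriv (\<lambda>z. \<Sum>n\<in>S. c n * (z+1) powr e n) z = (\<Sum>n\<in>S. (c n * e n) * (z+1) powr (e n - 1))"
    if "z > -1" for z
  proof (rule DERIV_imp_deriv)
    show "((\<lambda>z. \<Sum>n\<in>S. c n * (z+1) powr e n) has_real_derivative (\<Sum>n\<in>S. (c n * e n) * (z+1) powr (e n - 1))) (at z)"
      using that by (auto intro!: derivative_eq_intros sum.cong simp: mult_ac)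
  qed
  have ev: "eventually (\<lambda>z. deriv (\<lambda>z. \<Sum>n\<in>S. c n * (z+1) powr e n) z =
      (\<Sum>n\<in>S. (c n * e n) * (z+1) powr (e n - 1))) (nhds x)"
  proof -
    have "eventually (\<lambda>z. z \<in> {-1<..}) (nhds x)"
      using Suc.prems by (intro eventually_nhds_in_open) auto
    thus ?thesis by eventually_elim (use d in auto)
  qed
  have "(deriv ^^ Suc k) (\<lambda>z. \<Sum>n\<in>S. c n * (z+1) powr e n) x =
        (deriv ^^ k) (deriv (\<lambda>z. \<Sum>n\<in>S. c n * (z+1) powr e n)) x"
    by (simp add: funpow_Suc_right del: funpow.simps)
  also have "\<dots> = (deriv ^^ k) (\<lambda>z. \<Sum>n\<in>S. (c n * e n) * (z+1) powr (e n - 1)) x"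
    by (rule higher_deriv_cong_ev[OF ev refl])
  also have "\<dots> = (\<Sum>n\<in>S. (c n * e n) * ((\<Prod>i<k. (e n - 1 - real i)) * (x+1) powr (e n - 1 - real k)))"
    by (rule Suc.IH[OF Suc.prems])
  also have "\<dots> = (\<Sum>n\<in>S. c n * ((\<Prod>i<Suc k. (e n - real i)) * (x+1) powr (e n - real (Suc k))))"
  proof (rule sum.cong[OF refl])
    fix n
    have "(\<Prod>i<Suc k. (e n - real i)) = e n * (\<Prod>i<k. (e n - 1 - real i))"
      by (subst prod.lessThan_Suc_shift) (simp add: algebra_simps)
    thus "(c n * e n) * ((\<Prod>i<k. (e n - 1 - real i)) * (x+1) powr (e n - 1 - real k)) =
       c n * ((\<Prod>i<Suc k. (e n - real i)) * (x+1) powr (e n - real (Suc k)))"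
      by (simp add: algebra_simps)
  qed
  finally show ?case .
qed


definition Vw :: "real \<Rightarrow> nat \<Rightarrow> real \<Rightarrow> nat \<Rightarrow> real" where
  "Vw \<mu> k x n = (1 + x) powr \<mu> * ((Cc (real k - \<mu>) n / Gamma (real k - \<mu>)) *
      ((\<Prod>i<k. (real n + (real k - \<mu>) - real i)) * (x+1) powr (real n + (real k - \<mu>) - real k)))"

lemma modRL_poly:
  fixes p :: "real poly"
  assumes "real k - 1 < \<mu>" "\<mu> < real k" "x > -1" "degree p \<le> N"
  shows "mod_RL_deriv \<mu> (poly p) x = (\<Sum>n\<le>N. coeff (pcompose p [:-1,1:]) n * Vw \<mu> k x n)"
proof -
  define \<rho> where "\<rho> = real k - \<mu>"
  have \<rho>: "\<rho> > 0" using assms by (simp add: \<rho>_def)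
  have "\<lceil>\<mu>\<rceil> = int k" by (rule ceiling_unique) (use assms in auto)
  hence kk: "nat \<lceil>\<mu>\<rceil> = k" by simp
  let ?c = "\<lambda>n. coeff (pcompose p [:-1,1:]) n * Cc \<rho> n / Gamma \<rho>"
  have ev: "eventually (\<lambda>z. RL_integral \<rho> (poly p) z = (\<Sum>n\<le>N. ?c n * (z+1) powr (real n + \<rho>))) (nhds x)"
  proof -
    have "eventually (\<lambda>z. z \<in> {-1<..}) (nhds x)"
      using assms by (intro eventually_nhds_in_open) auto
    thus ?thesis by eventually_elim (use RL_int_poly[OF \<rho> _ assms(4)] in auto)
  qed
  have "RL_deriv \<mu> (poly p) x = (deriv ^^ k) (RL_integral \<rho> (poly p)) x"
    unfolding RL_deriv_def kk \<rho>_def by simp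
  also have "\<dots> = (deriv ^^ k) (\<lambda>z. \<Sum>n\<le>N. ?c n * (z+1) powr (real n + \<rho>)) x"
    by (rule higher_deriv_cong_ev[OF ev refl])
  also have "\<dots> = (\<Sum>n\<le>N. ?c n * ((\<Prod>i<k. (real n + \<rho> - real i)) * (x+1) powr (real n + \<rho> - real k)))"
    by (rule higher_deriv_powr_sum) (use assms in auto)
  finally show ?thesis unfolding mod_RL_deriv_def Vw_def \<rho>_def
    by (simp add: sum_distrib_left mult_ac)
qed

lemma modRL_linear:
  fixes h :: "nat \<Rightarrow> real poly"
  assumes "real k - 1 < \<mu>" "\<mu> < real k" "x > -1" "finite L" "\<And>l. l \<in> L \<Longrightarrow> degree (h l) \<le> N"
  shows "mod_RL_deriv \<mu> (poly (\<Sum>l\<in>L. Polynomial.smult (c l) (h l))) x = (\<Sum>l\<in>L. c l * mod_RL_deriv \<mu> (poly (h l)) x)"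
proof -
  have dg: "degree (\<Sum>l\<in>L. Polynomial.smult (c l) (h l)) \<le> N"
    by (rule degree_sum_le) (use assms(4,5) degree_smult_le order_trans in blast)+
  have "mod_RL_deriv \<mu> (poly (\<Sum>l\<in>L. Polynomial.smult (c l) (h l))) x =
     (\<Sum>n\<le>N. coeff (pcompose (\<Sum>l\<in>L. Polynomial.smult (c l) (h l)) [:-1,1:]) n * Vw \<mu> k x n)"
    by (rule modRL_poly[OF assms(1-3) dg])
  also have "\<dots> = (\<Sum>n\<le>N. (\<Sum>l\<in>L. c l * coeff (pcompose (h l) [:-1,1:]) n) * Vw \<mu> k x n)"
    by (simp add: pcompose_sum pcompose_smult coeff_sum)
  also have "\<dots> = (\<Sum>l\<in>L. c l * (\<Sum>n\<le>N. coeff (pcompose (h l) [:-1,1:]) n * Vw \<mu> k x n))"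
    by (simp add: sum_distrib_left sum_distrib_right mult_ac sum.swap[of _ "{..N}"])
  also have "\<dots> = (\<Sum>l\<in>L. c l * mod_RL_deriv \<mu> (poly (h l)) x)"
    by (rule sum.cong[OF refl]) (simp add: modRL_poly[OF assms(1-3) assms(5)])
  finally show ?thesis .
qed

lemma interp:
  fixes p :: "real poly" and h :: "nat \<Rightarrow> real poly"
  assumes inj: "inj_on x {0..N}" and hi: "\<And>i j. i \<le> N \<Longrightarrow> j \<le> N \<Longrightarrow> poly (h j) (x i) = (if i = j then 1 else 0)"
    and hd: "\<And>j. j \<le> N \<Longrightarrow> degree (h j) \<le> N" and pd: "degree p \<le> N"
  shows "p = (\<Sum>l\<in>{0..N}. Polynomial.smult (poly p (x l)) (h l))"
proof (rule ccontr)
  define r where "r = p - (\<Sum>l\<in>{0..N}. Polynomial.smult (poly p (x l)) (h l))"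
  assume "p \<noteq> (\<Sum>l\<in>{0..N}. Polynomial.smult (poly p (x l)) (h l))"
  hence r0: "r \<noteq> 0" by (simp add: r_def)
  have "degree (\<Sum>l\<in>{0..N}. Polynomial.smult (poly p (x l)) (h l)) \<le> N"
    by (rule degree_sum_le) (use hd degree_smult_le order_trans in fastforce)+
  hence dr: "degree r \<le> N" unfolding r_def using pd degree_diff_le by blast
  have roots: "x ` {0..N} \<subseteq> {t. poly r t = 0}"
  proof
    fix t assume "t \<in> x ` {0..N}"
    then obtain i where i: "i \<le> N" "t = x i" by auto
    have "(\<Sum>l\<in>{0..N}. poly p (x l) * poly (h l) (x i)) = poly p (x i)"
    proof -
      have "(\<Sum>l\<in>{0..N}. poly p (x l) * poly (h l) (x i)) = (\<Sum>l\<in>{0..N}. if l = i then poly p (x i) else 0)"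
        by (rule sum.cong[OF refl]) (use i in \<open>auto simp: hi\<close>)
      also have "\<dots> = poly p (x i)" using i by simp
      finally show ?thesis .
    qed
    thus "t \<in> {t. poly r t = 0}" using i by (simp add: r_def poly_sum)
  qed
  have "N + 1 = card (x ` {0..N})" using inj by (simp add: card_image)
  also have "\<dots> \<le> card {t. poly r t = 0}"
    by (rule card_mono[OF poly_roots_finite[OF r0] roots])
  also have "\<dots> \<le> degree r" by (rule card_poly_roots_bound[OF r0])
  finally show False using dr by simp
qed



lemma gchoose_pos:
  assumes "r > real j - 1" shows "(r::real) gchoose j > 0"
  unfolding gbinomial_pochhammer' using assms by (intro divide_pos_pos pochhammer_pos) auto

definition jd :: "(nat \<Rightarrow> real) \<Rightarrow> nat \<Rightarrow> real \<Rightarrow> real \<Rightarrow> real" where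
  "jd c N u v = (\<Sum>m\<le>N. c m * (real m * u^(m-1) * v^(N-m) + real (N-m) * u^m * v^(N-m-1)))"

lemma jd_pos:
  assumes "U > 0" "V > 0" "N \<ge> 1" "\<And>m. m \<le> N \<Longrightarrow> c m > 0"
  shows "jd c N U V > 0"
proof -
  let ?f = "\<lambda>i. c i * (real i * U ^ (i - 1) * V ^ (N - i) + real (N - i) * U ^ i * V ^ (N - i - 1))"
  have "0 < ?f N" using assms by simp
  also have "?f N \<le> sum ?f {..N}"
  proof (rule member_le_sum)
    fix i assume "i \<in> {..N} - {N}"
    hence "i \<le> N" by auto
    thus "0 \<le> ?f i" using assms(1,2) assms(4)[of i]
      by (intro mult_nonneg_nonneg add_nonneg_nonneg) auto
  qed auto
  finally show ?thesis unfolding jd_def .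
qed

lemma jd_neg:
  assumes "U > 0" "V > 0" "N \<ge> 1" "\<And>m. m \<le> N \<Longrightarrow> c m > 0"
  shows "jd c N (-U) (-V) \<noteq> 0"
proof -
  have t1: "real m * (-U)^(m-1) * (-V)^(N-m) = (-1)^(N-1) * (real m * U^(m-1) * V^(N-m))" if "m \<le> N" for m
  proof (cases "m = 0")
    case False
    have "(m-1) + (N-m) = N - 1" using that False by simp
    hence "(-1::real)^(m-1) * (-1)^(N-m) = (-1)^(N-1)" by (metis power_add)
    thus ?thesis by (simp add: power_minus[of U] power_minus[of V] mult_ac)
  qed simp
  have t2: "real (N-m) * (-U)^m * (-V)^(N-m-1) = (-1)^(N-1) * (real (N-m) * U^m * V^(N-m-1))" if "m \<le> N" for m
  proof (cases "m = N")
    case False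
    have "m + (N-m-1) = N - 1" using that False by simp
    hence "(-1::real)^m * (-1)^(N-m-1) = (-1)^(N-1)" by (metis power_add)
    thus ?thesis by (simp add: power_minus[of U] power_minus[of V] mult_ac)
  qed simp
  have "jd c N (-U) (-V) = (-1)^(N-1) * jd c N U V"
    unfolding jd_def sum_distrib_left
  proof (rule sum.cong[OF refl])
    fix m assume "m \<in> {..N}"
    hence m: "m \<le> N" by simp
    show "c m * (real m * (-U)^(m-1) * (-V)^(N-m) + real (N-m) * (-U)^m * (-V)^(N-m-1)) =
      (-1)^(N-1) * (c m * (real m * U^(m-1) * V^(N-m) + real (N-m) * U^m * V^(N-m-1)))"
      unfolding t1[OF m] t2[OF m] by (simp add: algebra_simps)
  qed
  moreover have "jd c N U V > 0" by (rule jd_pos) (use assms in auto)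
  ultimately show ?thesis by simp
qed

lemma poly_jacobi:
  "poly (jacobi_poly a b N) t = (\<Sum>m\<le>N. (((real N + a) gchoose (N - m)) * ((real N + b) gchoose m)) *
      (((t-1)/2)^m * ((t+1)/2)^(N-m)))"
  unfolding jacobi_poly_def by (simp add: poly_sum field_simps)

lemma poly_pderiv_jacobi:
  "poly (pderiv (jacobi_poly a b N)) t = jd (\<lambda>m. ((real N + a) gchoose (N - m)) * ((real N + b) gchoose m)) N ((t-1)/2) ((t+1)/2) / 2"
proof -
  define c where "c = (\<lambda>m. ((real N + a) gchoose (N - m)) * ((real N + b) gchoose m))"
  have "((\<lambda>t. \<Sum>m\<le>N. c m * (((t-1)/2)^m * ((t+1)/2)^(N-m))) has_real_derivative
     jd c N ((t-1)/2) ((t+1)/2) / 2) (at t)"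
    unfolding jd_def sum_divide_distrib
  proof (rule DERIV_sum)
    fix m
    show "((\<lambda>t. c m * (((t-1)/2)^m * ((t+1)/2)^(N-m))) has_real_derivative
       c m * (real m * ((t-1)/2)^(m-1) * ((t+1)/2)^(N-m) + real (N-m) * ((t-1)/2)^m * ((t+1)/2)^(N-m-1)) / 2) (at t)"
      by (auto intro!: derivative_eq_intros simp: algebra_simps)
  qed
  moreover have "(\<lambda>t. \<Sum>m\<le>N. c m * (((t-1)/2)^m * ((t+1)/2)^(N-m))) = poly (jacobi_poly a b N)"
    by (rule ext) (simp add: poly_jacobi c_def)
  ultimately have "(poly (jacobi_poly a b N) has_real_derivative jd c N ((t-1)/2) ((t+1)/2) / 2) (at t)"
    by simp
  from DERIV_unique[OF poly_DERIV this] show ?thesis by (simp add: c_def)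
qed

lemma JGL_roots:
  assumes "a > -1" "b > -1" "N \<ge> 1" "poly (JGL_poly a b N) t = 0"
  shows "-1 \<le> t \<and> t \<le> 1"
proof (rule ccontr)
  assume out: "\<not> (-1 \<le> t \<and> t \<le> 1)"
  define c where "c = (\<lambda>m. ((real N + a) gchoose (N - m)) * ((real N + b) gchoose m))"
  have cpos: "c m > 0" if "m \<le> N" for m
    unfolding c_def using assms that by (intro mult_pos_pos gchoose_pos) auto
  have "t * t \<noteq> 1"
  proof (cases "t > 1")
    case True
    hence "t * t > 1 * 1" by (intro mult_strict_mono) auto
    thus ?thesis by simp
  next
    case False
    hence "-t > 1" using out by auto
    hence "(-t) * (-t) > 1 * 1" by (intro mult_strict_mono) auto
    thus ?thesis by simp
  qed
  hence "poly [:1, 0, -1:] t \<noteq> 0" by (simp add: algebra_simps)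
  hence "poly (pderiv (jacobi_poly a b N)) t = 0" using assms(4) by (simp add: JGL_poly_def)
  hence jd0: "jd c N ((t-1)/2) ((t+1)/2) = 0" by (simp add: poly_pderiv_jacobi c_def)
  show False
  proof (cases "t > 1")
    case True
    have "jd c N ((t-1)/2) ((t+1)/2) > 0" using True assms cpos by (intro jd_pos) auto
    thus False using jd0 by simp
  next
    case False
    hence t: "t < -1" using out by auto
    have "jd c N (-((1-t)/2)) (-(-(t+1)/2)) \<noteq> 0" using t assms cpos by (intro jd_neg) auto
    thus False using jd0 by (simp add: minus_divide_left add.commute)
  qed
qed

lemma JGL_pm1: "poly (JGL_poly a b N) 1 = 0" "poly (JGL_poly a b N) (-1) = 0"
  by (simp_all add: JGL_poly_def)



lemma inv_swap:
  fixes F G :: "nat \<Rightarrow> nat \<Rightarrow> real"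
  assumes h: "\<forall>i\<in>{1..n}. \<forall>j\<in>{1..n}. (\<Sum>l\<in>{1..n}. F i l * G l j) = (if i = j then 1 else 0)"
  shows "\<forall>i\<in>{1..n}. \<forall>j\<in>{1..n}. (\<Sum>l\<in>{1..n}. G i l * F l j) = (if i = j then 1 else 0)"
proof -
  define A where "A = mat n n (\<lambda>(i,j). F (Suc i) (Suc j))"
  define B where "B = mat n n (\<lambda>(i,j). G (Suc i) (Suc j))"
  have sh: "\<And>f. (\<Sum>l\<in>{1..n}. f l) = (\<Sum>l\<in>{0..<n}. f (Suc l))"
    by (metis One_nat_def atLeast0LessThan sum.atLeast1_atMost_eq)
  have AB: "A * B = 1\<^sub>m n"
  proof (rule eq_matI)
    fix i j assume ij: "i < dim_row (1\<^sub>m n :: real mat)" "j < dim_col (1\<^sub>m n :: real mat)"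
    hence "(A * B) $$ (i, j) = (\<Sum>l\<in>{0..<n}. F (Suc i) (Suc l) * G (Suc l) (Suc j))"
      by (simp add: A_def B_def scalar_prod_def)
    also have "\<dots> = (\<Sum>l\<in>{1..n}. F (Suc i) l * G l (Suc j))" by (rule sh[symmetric])
    also have "\<dots> = (if i = j then 1 else 0)" using h ij by auto
    finally show "(A * B) $$ (i, j) = 1\<^sub>m n $$ (i, j)" using ij by simp
  qed (auto simp: A_def B_def)
  have BA: "B * A = 1\<^sub>m n"
    by (rule mat_mult_left_right_inverse[OF _ _ AB]) (auto simp: A_def B_def)
  show ?thesis
  proof (intro ballI)
    fix i j assume ij: "i \<in> {1..n}" "j \<in> {1..n}"
    have "(B * A) $$ (i - 1, j - 1) = (\<Sum>l\<in>{0..<n}. G i (Suc l) * F (Suc l) j)"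
    proof -
      have a: "i - 1 < n" "j - 1 < n" "Suc (i - Suc 0) = i" "Suc (j - Suc 0) = j" using ij by auto
      show ?thesis unfolding A_def B_def using a(1,2) by (simp add: scalar_prod_def a(3,4))
    qed
    also have "\<dots> = (\<Sum>l\<in>{1..n}. G i l * F l j)" by (rule sh[symmetric])
    finally show "(\<Sum>l\<in>{1..n}. G i l * F l j) = (if i = j then 1 else 0)"
      using ij BA by (auto split: if_splits)
  qed
qed

theorem theorem5p1:
  fixes N k :: nat and a b \<mu> :: real
    and x :: "nat \<Rightarrow> real" and h Q :: "nat \<Rightarrow> real poly"
  assumes N: "N \<ge> 2"
    and ab: "a > -1" "b > -1"
    and nodes_mono: "strict_mono_on {0..N} x"
    and nodes: "x ` {0..N} = {t. poly (JGL_poly a b N) t = 0}"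
    and h_deg: "\<And>j. j \<le> N \<Longrightarrow> degree (h j) \<le> N"
    and h_interp: "\<And>i j. i \<le> N \<Longrightarrow> j \<le> N \<Longrightarrow> poly (h j) (x i) = (if i = j then 1 else 0)"
    and k: "k \<in> {1, 2}"
    and mu: "real k - 1 < \<mu>" "\<mu> < real k"
    and Q_deg: "\<And>j. j \<in> {1..N+1-k} \<Longrightarrow> degree (Q j) \<le> N"
    and Q_coll: "\<And>i j. i \<in> {1..N+1-k} \<Longrightarrow> j \<in> {1..N+1-k} \<Longrightarrow>
                   mod_RL_deriv \<mu> (poly (Q j)) (x i) = (if i = j then 1 else 0)"
    and Q_left: "\<And>j. j \<in> {1..N+1-k} \<Longrightarrow> poly (Q j) (-1) = 0"
    and Q_right: "\<And>j. k = 2 \<Longrightarrow> j \<in> {1..N+1-k} \<Longrightarrow> poly (Q j) 1 = 0"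
  shows "(\<forall>i\<in>{1..N+1-k}. \<forall>j\<in>{1..N+1-k}.
            (\<Sum>l\<in>{1..N+1-k}. poly (Q l) (x i) * mod_RL_deriv \<mu> (poly (h j)) (x l))
              = (if i = j then 1 else 0))
       \<and> (\<forall>i\<in>{1..N+1-k}. \<forall>j\<in>{1..N+1-k}.
            (\<Sum>l\<in>{1..N+1-k}. mod_RL_deriv \<mu> (poly (h l)) (x i) * poly (Q j) (x l))
              = (if i = j then 1 else 0))"
  proof -
  have k12: "k = 1 \<or> k = 2" using k by auto
  define n where "n = N + 1 - k"
  have N1: "N \<ge> 1" using N by simp
  have inj: "inj_on x {0..N}" using nodes_mono strict_mono_on_imp_inj_on by blast
  have rng: "-1 \<le> x i \<and> x i \<le> 1" if "i \<le> N" for i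
  proof -
    have "x i \<in> {t. poly (JGL_poly a b N) t = 0}" using nodes that by auto
    thus ?thesis using JGL_roots[OF ab N1] by auto
  qed
  have x0: "x 0 = -1"
  proof -
    have "-1 \<in> x ` {0..N}" using nodes JGL_pm1 by auto
    then obtain m where m: "m \<le> N" "x m = -1" by auto
    show ?thesis
    proof (cases "m = 0")
      case False
      hence "x 0 < x m" using m by (intro strict_mono_onD[OF nodes_mono]) auto
      thus ?thesis using m rng[of 0] by auto
    qed (use m in auto)
  qed
  have xN: "x N = 1"
  proof -
    have "1 \<in> x ` {0..N}" using nodes JGL_pm1 by auto
    then obtain m where m: "m \<le> N" "x m = 1" by auto
    show ?thesis
    proof (cases "m = N")
      case False
      hence "x m < x N" using m by (intro strict_mono_onD[OF nodes_mono]) auto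
      thus ?thesis using m rng[of N] by auto
    qed (use m in auto)
  qed
  have xi: "x i > -1" "i \<le> N" if "i \<in> {1..n}" for i
  proof -
    show "i \<le> N" using that k12 by (auto simp: n_def)
    hence "x 0 < x i" using that by (intro strict_mono_onD[OF nodes_mono]) auto
    thus "x i > -1" using x0 by simp
  qed
  have expand: "Q j = (\<Sum>l\<in>{1..n}. Polynomial.smult (poly (Q j) (x l)) (h l))" if j: "j \<in> {1..n}" for j
  proof -
    have "Q j = (\<Sum>l\<in>{0..N}. Polynomial.smult (poly (Q j) (x l)) (h l))"
      by (rule interp[OF inj h_interp h_deg Q_deg]) (use j in \<open>auto simp: n_def\<close>)
    also have "\<dots> = (\<Sum>l\<in>{1..n}. Polynomial.smult (poly (Q j) (x l)) (h l))"
    proof (rule sum.mono_neutral_right)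
      show "{1..n} \<subseteq> {0..N}" using k12 by (auto simp: n_def)
      show "\<forall>l\<in>{0..N} - {1..n}. Polynomial.smult (poly (Q j) (x l)) (h l) = 0"
      proof
        fix l assume l: "l \<in> {0..N} - {1..n}"
        hence "l = 0 \<or> (k = 2 \<and> l = N)" using k12 by (auto simp: n_def)
        hence "poly (Q j) (x l) = 0"
          using Q_left[of j] Q_right[of j] j x0 xN by (auto simp: n_def)
        thus "Polynomial.smult (poly (Q j) (x l)) (h l) = 0" by simp
      qed
    qed auto
    finally show ?thesis .
  qed
  have second: "\<forall>i\<in>{1..n}. \<forall>j\<in>{1..n}.
      (\<Sum>l\<in>{1..n}. mod_RL_deriv \<mu> (poly (h l)) (x i) * poly (Q j) (x l)) = (if i = j then 1 else 0)"
  proof (intro ballI)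
    fix i j assume i: "i \<in> {1..n}" and j: "j \<in> {1..n}"
    have "(if i = j then 1 else 0) = mod_RL_deriv \<mu> (poly (Q j)) (x i)"
      using Q_coll[of i j] i j by (simp add: n_def)
    also have "\<dots> = mod_RL_deriv \<mu> (poly (\<Sum>l\<in>{1..n}. Polynomial.smult (poly (Q j) (x l)) (h l))) (x i)"
      using expand[OF j] by simp
    also have "\<dots> = (\<Sum>l\<in>{1..n}. poly (Q j) (x l) * mod_RL_deriv \<mu> (poly (h l)) (x i))"
      by (rule modRL_linear[OF mu xi(1)[OF i], where N=N]) (use h_deg xi(2) in auto)
    finally show "(\<Sum>l\<in>{1..n}. mod_RL_deriv \<mu> (poly (h l)) (x i) * poly (Q j) (x l)) = (if i = j then 1 else 0)"
      by (simp add: mult.commute)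
  qed
  have first: "\<forall>i\<in>{1..n}. \<forall>j\<in>{1..n}.
      (\<Sum>l\<in>{1..n}. poly (Q l) (x i) * mod_RL_deriv \<mu> (poly (h j)) (x l)) = (if i = j then 1 else 0)"
    using inv_swap[of n "\<lambda>i l. mod_RL_deriv \<mu> (poly (h l)) (x i)" "\<lambda>l j. poly (Q j) (x l)"] second
    by simp
  show ?thesis using first second unfolding n_def by blast
qed

end
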